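(* Assume A1, A2 and A3(iii) with constant $K<1$. Then for every $\alpha\in(0,-\log_\rho K)$, $$\rho^{\alpha n}\,\mathbb E\bigl(|\bm Z_n|^{-1}\bigr)\to 0\quad\text{as } n\to\infty.$$
   Context: Fix an integer $l\ge 2$, let $\mathbb N=\{0,1,2,\dots\}$, and for $\bm x\in\mathbb R^l$ let $|\bm x|=\sum_{i=1}^l|x_i|$. $(\bm Z_n)_{n\ge0}$ is an $l$-type Galton–Watson process started from a canonical basis vector, defined by $\bm Z_n=\sum_{j=1}^l\sum_{i=1}^{Z_{n-1,j}}\bm Y^{(j)}_{n-1,i}$ with mutually independent offspring vectors, $\bm Y^{(j)}_{n-1,i}$ having law $p_j$ on $\mathbb N^l$; $\bm Y^{(i)}$ denotes a random vector with law $p_i$. The mean matrix $M$ has entries $M_{ik}=\mathbb E(Y^{(i)}_k)$. Assumption A1: for every $j$, $p_j(\bm 0)=0$ and $\sum_{k=1}^l p_j(\bm e_k)<1$. Assumption A2: $M$ is positively regular and its largest eigenvalue $\rho$ satisfies $\rho>1$. Assumption A3(iii): there is a constant $K$ with $\mathbb E(|\bm Y^{(i)}|^{-1})\le K$ for all $i\in\{1,\dots,l\}$. *)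

theory Defs
  imports "HOL-Analysis.Analysis" "HOL-Probability.Probability"
begin

definition vnorm :: "nat ^ 'l::finite \<Rightarrow> nat" where
  "vnorm x = (\<Sum>i\<in>UNIV. x $ i)"

fun iid_sum :: "(nat ^ 'l::finite) pmf \<Rightarrow> nat \<Rightarrow> (nat ^ 'l) pmf" where
  "iid_sum q 0 = return_pmf 0"
| "iid_sum q (Suc k) = bind_pmf q (\<lambda>y. map_pmf (\<lambda>s. y + s) (iid_sum q k))"

text \<open>One generation: given Z_{n-1} = z, law of sum over j of sum_{i<z_j} Y^(j)_i,
  all offspring vectors independent.\<close>
definition gw_step :: "('l::finite \<Rightarrow> (nat ^ 'l) pmf) \<Rightarrow> nat ^ 'l \<Rightarrow> (nat ^ 'l) pmf" where
  "gw_step p z = map_pmf (\<lambda>f. \<Sum>j\<in>UNIV. f j) (Pi_pmf UNIV 0 (\<lambda>j. iid_sum (p j) (z $ j)))"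

fun gw :: "('l::finite \<Rightarrow> (nat ^ 'l) pmf) \<Rightarrow> 'l \<Rightarrow> nat \<Rightarrow> (nat ^ 'l) pmf" where
  "gw p i 0 = return_pmf (axis i 1)"
| "gw p i (Suc n) = bind_pmf (gw p i n) (gw_step p)"

definition mean_matrix :: "('l::finite \<Rightarrow> (nat ^ 'l) pmf) \<Rightarrow> real ^ 'l ^ 'l" where
  "mean_matrix p = (\<chi> i k. measure_pmf.expectation (p i) (\<lambda>y. real (y $ k)))"

fun mat_pow :: "real ^ 'n::finite ^ 'n \<Rightarrow> nat \<Rightarrow> real ^ 'n ^ 'n" where
  "mat_pow M 0 = mat 1"
| "mat_pow M (Suc n) = M ** mat_pow M n"

definition positively_regular :: "real ^ 'n::finite ^ 'n \<Rightarrow> bool" where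
  "positively_regular M \<longleftrightarrow> (\<forall>i j. M $ i $ j \<ge> 0) \<and> (\<exists>m>0. \<forall>i j. mat_pow M m $ i $ j > 0)"

definition largest_eigenvalue :: "real ^ 'n::finite ^ 'n \<Rightarrow> real \<Rightarrow> bool" where
  "largest_eigenvalue M r \<longleftrightarrow>
     (\<exists>v. v \<noteq> 0 \<and> M *v v = r *\<^sub>R v) \<and>
     (\<forall>\<mu> v. v \<noteq> 0 \<and> M *v v = \<mu> *\<^sub>R v \<longrightarrow> \<mu> \<le> r)"

end

theory Submission
  imports Defs
begin

lemma intb: fixes f :: "'a \<Rightarrow> real"
  assumes "\<And>x. \<bar>f x\<bar> \<le> B" shows "integrable (measure_pmf M) f"
  by (rule measure_pmf.integrable_const_bound[where B=B]) (auto simp: assms)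

lemma exp_bind:
  fixes f :: "'b \<Rightarrow> real"
  assumes "\<And>x. 0 \<le> f x" "\<And>x. f x \<le> 1"
  shows "measure_pmf.expectation (bind_pmf M N) f
       = measure_pmf.expectation M (\<lambda>x. measure_pmf.expectation (N x) f)"
proof -
  have i1: "\<And>Q. integrable (measure_pmf Q) f" by (rule intb[where B=1]) (use assms in auto)
  have nn: "\<And>Q. 0 \<le> measure_pmf.expectation Q f" by (simp add: assms integral_nonneg_AE)
  have le: "\<And>Q. measure_pmf.expectation Q f \<le> 1"
  proof -
    fix Q have "measure_pmf.expectation Q f \<le> measure_pmf.expectation Q (\<lambda>_. 1)"
      by (rule integral_mono) (auto simp: i1 assms)
    then show "measure_pmf.expectation Q f \<le> 1" by simp
  qed
  have i2: "integrable (measure_pmf M) (\<lambda>x. measure_pmf.expectation (N x) f)"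
    by (rule intb[where B=1]) (use nn le in auto)
  have "ennreal (measure_pmf.expectation (bind_pmf M N) f) = (\<integral>\<^sup>+ y. f y \<partial>bind_pmf M N)"
    by (rule nn_integral_eq_integral[symmetric]) (auto simp: i1 assms)
  also have "\<dots> = (\<integral>\<^sup>+ x. \<integral>\<^sup>+ y. f y \<partial>N x \<partial>M)" by simp
  also have "\<dots> = (\<integral>\<^sup>+ x. ennreal (measure_pmf.expectation (N x) f) \<partial>M)"
    by (intro nn_integral_cong nn_integral_eq_integral) (auto simp: i1 assms)
  also have "\<dots> = ennreal (measure_pmf.expectation M (\<lambda>x. measure_pmf.expectation (N x) f))"
    by (rule nn_integral_eq_integral) (auto simp: i2 nn)
  finally show ?thesis
    by (subst (asm) ennreal_inj) (auto simp: nn integral_nonneg_AE)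
qed
lemma cs_ineq:
  fixes m k a b :: nat
  assumes "m \<le> a" "k \<le> b"
  shows "(real m + real k)^2 / (real a + real b) \<le> (real m)^2 / real a + (real k)^2 / real b"
proof (cases "a = 0 \<or> b = 0")
  case True
  then show ?thesis using assms by auto
next
  case False
  then have a: "real a > 0" and b: "real b > 0" by auto
  have "(real m + real k)^2 * (real a * real b) \<le> ((real m)^2 * real b + (real k)^2 * real a) * (real a + real b)"
  proof -
    have "0 \<le> (real m * real b - real k * real a)^2" by simp
    then show ?thesis by (simp add: power2_eq_square algebra_simps)
  qed
  then show ?thesis using a b by (simp add: field_simps)
qed

definition gi :: "nat ^ 'l::finite \<Rightarrow> real" where "gi = (\<lambda>z. 1 / real (vnorm z))"

lemma gi_nonneg: "0 \<le> gi z" by (simp add: gi_def)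
lemma gi_le1: "gi z \<le> 1" by (cases "vnorm z = 0") (auto simp: gi_def divide_le_eq_1)

lemma vnorm_add: "vnorm (x + y) = vnorm x + vnorm y"
  by (simp add: vnorm_def sum.distrib)

lemma vnorm_zero_iff: "vnorm x = 0 \<longleftrightarrow> x = 0"
  by (simp add: vnorm_def vec_eq_iff)

lemma vnorm_zero[simp]: "vnorm 0 = 0" by (simp add: vnorm_def)

definition good :: "real \<Rightarrow> (nat ^ 'l::finite) pmf \<Rightarrow> nat \<Rightarrow> bool" where
  "good K q m \<longleftrightarrow> (\<forall>x\<in>set_pmf q. m \<le> vnorm x) \<and> measure_pmf.expectation q gi * real m \<le> K"

definition comb :: "(nat ^ 'l::finite) pmf \<Rightarrow> (nat ^ 'l) pmf \<Rightarrow> (nat ^ 'l) pmf" where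
  "comb q1 q2 = bind_pmf q1 (\<lambda>y. map_pmf (\<lambda>s. y + s) q2)"

lemma good_comb:
  assumes K: "0 \<le> K" and g1: "good K q1 m" and g2: "good K q2 k"
  shows "good K (comb q1 q2) (m + k)"
proof -
  have s1: "\<And>x. x \<in> set_pmf q1 \<Longrightarrow> m \<le> vnorm x" and e1: "measure_pmf.expectation q1 gi * real m \<le> K"
    using g1 by (auto simp: good_def)
  have s2: "\<And>x. x \<in> set_pmf q2 \<Longrightarrow> k \<le> vnorm x" and e2: "measure_pmf.expectation q2 gi * real k \<le> K"
    using g2 by (auto simp: good_def)
  have supp: "\<forall>x\<in>set_pmf (comb q1 q2). m + k \<le> vnorm x"
    using s1 s2 by (auto simp: comb_def vnorm_add add_mono)
  let ?E = "measure_pmf.expectation"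
  have E: "?E (comb q1 q2) gi = ?E q1 (\<lambda>x. ?E q2 (\<lambda>y. gi (x + y)))"
    unfolding comb_def by (subst exp_bind) (auto simp: gi_nonneg gi_le1)
  have ib: "\<And>Q c. integrable (measure_pmf Q) (\<lambda>y. gi y * c)"
    by (rule intb[where B="\<bar>_\<bar>"]) (auto simp: abs_mult gi_nonneg gi_le1 intro!: mult_left_le_one_le)
  have ib0: "\<And>Q. integrable (measure_pmf Q) gi"
    by (rule intb[where B=1]) (auto simp: gi_nonneg gi_le1)
  have ib2: "\<And>Q x c. integrable (measure_pmf Q) (\<lambda>y. gi (x + y) * c)"
    by (rule intb[where B="\<bar>_\<bar>"]) (auto simp: abs_mult gi_nonneg gi_le1 intro!: mult_left_le_one_le)
  have ibc: "\<And>Q x. integrable (measure_pmf Q) (\<lambda>y. gi (x + y))"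
    by (rule intb[where B=1]) (auto simp: gi_nonneg gi_le1)
  have addE: "?E q2 (\<lambda>y. gi x * a + gi y * b) = gi x * a + ?E q2 gi * b" for x a b
    using Bochner_Integration.integral_add[OF measure_pmf.integrable_const[of q2 "gi x * a"] ib[of q2 b]] by simp
  have pw: "gi (x + y) * (real m + real k)^2 \<le> gi x * (real m)^2 + gi y * (real k)^2"
    if "x \<in> set_pmf q1" "y \<in> set_pmf q2" for x y
    using cs_ineq[OF s1[OF that(1)] s2[OF that(2)]]
    by (simp add: gi_def vnorm_add)
  have "?E (comb q1 q2) gi * (real m + real k)^2
      = ?E q1 (\<lambda>x. ?E q2 (\<lambda>y. gi (x + y) * (real m + real k)^2))"
    unfolding E by simp
  also have "\<dots> \<le> ?E q1 (\<lambda>x. ?E q2 (\<lambda>y. gi x * (real m)^2 + gi y * (real k)^2))"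
  proof (rule integral_mono_AE)
    show "integrable (measure_pmf q1) (\<lambda>x. ?E q2 (\<lambda>y. gi (x + y) * (real m + real k)^2))"
      unfolding integral_mult_left_zero
      by (rule intb[where B="(real m + real k)^2"])
         (auto simp: abs_mult gi_nonneg integral_nonneg_AE intro!: mult_left_le_one_le
            order_trans[OF integral_mono[OF ibc measure_pmf.integrable_const gi_le1]])
    show "integrable (measure_pmf q1) (\<lambda>x. ?E q2 (\<lambda>y. gi x * (real m)^2 + gi y * (real k)^2))"
    proof -
      have "(\<lambda>x. ?E q2 (\<lambda>y. gi x * (real m)^2 + gi y * (real k)^2)) = (\<lambda>x. gi x * (real m)^2 + ?E q2 gi * (real k)^2)"
        by (intro ext addE)
      then show ?thesis by (rule ssubst) (rule Bochner_Integration.integrable_add[OF ib[of q1 "(real m)^2"] measure_pmf.integrable_const[of q1 "?E q2 gi * (real k)^2"]])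
    qed
    show "AE x in measure_pmf q1. ?E q2 (\<lambda>y. gi (x + y) * (real m + real k)^2)
        \<le> ?E q2 (\<lambda>y. gi x * (real m)^2 + gi y * (real k)^2)"
      unfolding AE_measure_pmf_iff
    proof (intro ballI)
      fix x assume x: "x \<in> set_pmf q1"
      show "?E q2 (\<lambda>y. gi (x + y) * (real m + real k)^2) \<le> ?E q2 (\<lambda>y. gi x * (real m)^2 + gi y * (real k)^2)"
        by (rule integral_mono_AE[OF ib2 Bochner_Integration.integrable_add[OF measure_pmf.integrable_const ib]])
           (auto simp: AE_measure_pmf_iff intro!: pw x)
    qed
  qed
  also have "\<dots> = ?E q1 (\<lambda>x. gi x * (real m)^2 + ?E q2 gi * (real k)^2)"
    by (simp add: addE)
  also have "\<dots> = ?E q1 gi * (real m)^2 + ?E q2 gi * (real k)^2"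
    using Bochner_Integration.integral_add[OF ib[of q1 "(real m)^2"] measure_pmf.integrable_const[of q1 "?E q2 gi * (real k)^2"]] by simp
  also have "\<dots> \<le> K * real m + K * real k"
  proof -
    have "?E q1 gi * (real m)^2 = (?E q1 gi * real m) * real m" by (simp add: power2_eq_square)
    also have "\<dots> \<le> K * real m" using e1 by (intro mult_right_mono) auto
    finally have a: "?E q1 gi * (real m)^2 \<le> K * real m" .
    have "?E q2 gi * (real k)^2 = (?E q2 gi * real k) * real k" by (simp add: power2_eq_square)
    also have "\<dots> \<le> K * real k" using e2 by (intro mult_right_mono) auto
    finally have b: "?E q2 gi * (real k)^2 \<le> K * real k" .
    show ?thesis using a b by simp
  qed
  finally have main: "?E (comb q1 q2) gi * (real m + real k)^2 \<le> K * (real m + real k)"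
    by (simp add: algebra_simps)
  have "?E (comb q1 q2) gi * real (m + k) \<le> K"
  proof (cases "m + k = 0")
    case True then show ?thesis using K by simp
  next
    case False
    then have pos: "real m + real k > 0" by auto
    have "(?E (comb q1 q2) gi * (real m + real k)) * (real m + real k) \<le> K * (real m + real k)"
      using main by (simp add: power2_eq_square mult.assoc)
    then show ?thesis using pos by simp
  qed
  then show ?thesis using supp by (simp add: good_def)
qed


lemma good_return0: "0 \<le> K \<Longrightarrow> good K (return_pmf 0) 0"
  by (simp add: good_def)

lemma good_iid: assumes "0 \<le> K" "good K q 1" shows "good K (iid_sum q k) k"
proof (induction k)
  case 0 then show ?case using good_return0[OF assms(1)] by simp
next
  case (Suc k)
  have "good K (comb q (iid_sum q k)) (1 + k)" by (rule good_comb[OF assms Suc])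
  then show ?case by (simp add: comb_def)
qed

lemma good_Pi:
  fixes Q :: "'l::finite \<Rightarrow> (nat ^ 'l) pmf" and c :: "'l \<Rightarrow> nat"
  assumes K: "0 \<le> K" and A: "finite A" and g: "\<And>j. good K (Q j) (c j)"
  shows "good K (map_pmf (\<lambda>f. \<Sum>j\<in>A. f j) (Pi_pmf A 0 Q)) (\<Sum>j\<in>A. c j)"
  using A
proof (induction A rule: finite_induct)
  case empty then show ?case using good_return0[OF K] by simp
next
  case (insert x A)
  have eq: "map_pmf (\<lambda>f. \<Sum>j\<in>insert x A. f j) (Pi_pmf (insert x A) 0 Q)
      = comb (Q x) (map_pmf (\<lambda>f. \<Sum>j\<in>A. f j) (Pi_pmf A 0 Q))"
  proof -
    have s: "(\<Sum>j\<in>insert x A. if j = x then y else f j) = y + (\<Sum>j\<in>A. f j)" for f :: "'l \<Rightarrow> nat ^ 'l" and y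
    proof -
      have "(\<Sum>j\<in>A. if j = x then y else f j) = (\<Sum>j\<in>A. f j)"
        using insert.hyps(2) by (intro sum.cong) auto
      then show ?thesis using insert.hyps by simp
    qed
    show ?thesis
      unfolding Pi_pmf_insert[OF insert.hyps] comb_def pair_pmf_def
      by (simp add: map_bind_pmf map_pmf_comp s bind_return_pmf map_pmf_def[symmetric] case_prod_beta)
  qed
  show ?case unfolding eq using good_comb[OF K g insert.IH] insert.hyps by simp
qed

lemma good_step:
  assumes K: "0 \<le> K" and g: "\<And>j. good K (p j) 1"
  shows "good K (gw_step p z) (vnorm z)"
  using good_Pi[OF K finite_class.finite_UNIV, of "\<lambda>j. iid_sum (p j) (z $ j)" "\<lambda>j. z $ j"] good_iid[OF K g]
  unfolding gw_step_def vnorm_def by blast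


lemma exp_gi_bounds: "0 \<le> measure_pmf.expectation q gi" "measure_pmf.expectation q gi \<le> 1"
proof -
  show "0 \<le> measure_pmf.expectation q gi" by (simp add: integral_nonneg_AE gi_nonneg)
  have "measure_pmf.expectation q gi \<le> measure_pmf.expectation q (\<lambda>_. 1)"
    by (rule integral_mono) (auto simp: gi_le1 intro: intb[where B=1] simp: gi_nonneg)
  then show "measure_pmf.expectation q gi \<le> 1" by simp
qed

lemma vnorm_axis: "vnorm (axis i (1::nat)) = 1"
  by (simp add: vnorm_def axis_def)

theorem lemma3p2:
  fixes p :: "'l::finite \<Rightarrow> (nat ^ 'l) pmf" and \<rho> K \<alpha> :: real and i :: 'l
  assumes l2: "CARD('l) \<ge> 2"
    and A1: "\<And>j. pmf (p j) 0 = 0" "\<And>j. (\<Sum>k\<in>UNIV. pmf (p j) (axis k 1)) < 1"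
    and mean_finite: "\<And>j k. integrable (measure_pmf (p j)) (\<lambda>y. real (y $ k))"
    and A2: "positively_regular (mean_matrix p)" "largest_eigenvalue (mean_matrix p) \<rho>" "\<rho> > 1"
    and A3: "\<And>j. measure_pmf.expectation (p j) (\<lambda>y. 1 / real (vnorm y)) \<le> K"
    and K1: "K < 1"
    and alpha: "0 < \<alpha>" "\<alpha> < - log \<rho> K"
  shows "(\<lambda>n. \<rho> powr (\<alpha> * real n) * measure_pmf.expectation (gw p i n) (\<lambda>z. 1 / real (vnorm z)))
           \<longlonglongrightarrow> 0"
proof -
  let ?E = "measure_pmf.expectation"
  have A3': "\<And>j. ?E (p j) gi \<le> K" using A3 by (simp add: gi_def)
  have suppp: "\<And>j y. y \<in> set_pmf (p j) \<Longrightarrow> 1 \<le> vnorm y"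
  proof -
    fix j y assume "y \<in> set_pmf (p j)"
    then have "y \<noteq> 0" using A1(1)[of j] by (auto simp: set_pmf_iff)
    then show "1 \<le> vnorm y" using vnorm_zero_iff[of y] by linarith
  qed
  have Kpos: "K > 0"
  proof -
    have ne: "?E (p i) gi \<noteq> 0"
    proof
      assume "?E (p i) gi = 0"
      then have "AE x in measure_pmf (p i). gi x = 0"
        using integral_nonneg_eq_0_iff_AE[of "measure_pmf (p i)" gi, OF intb[where B=1]]
        by (auto simp: gi_nonneg gi_le1)
      then have "\<forall>x\<in>set_pmf (p i). gi x = 0" by (simp add: AE_measure_pmf_iff)
      moreover obtain x where "x \<in> set_pmf (p i)" using set_pmf_not_empty[of "p i"] by blast
      ultimately show False using suppp[of x i] by (auto simp: gi_def)
    qed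
    then show ?thesis using exp_gi_bounds(1)[of "p i"] A3'[of i] by linarith
  qed
  have K0: "0 \<le> K" using Kpos by simp
  have g1: "\<And>j. good K (p j) 1" using A3' suppp by (simp add: good_def)
  have supp: "\<forall>z\<in>set_pmf (gw p i n). 1 \<le> vnorm z" for n
  proof (induction n)
    case 0 then show ?case using vnorm_axis[of i] by simp
  next
    case (Suc n)
    show ?case
    proof
      fix z' assume "z' \<in> set_pmf (gw p i (Suc n))"
      then obtain z where z: "z \<in> set_pmf (gw p i n)" and z': "z' \<in> set_pmf (gw_step p z)" by auto
      have "vnorm z \<le> vnorm z'" using good_step[OF K0 g1, where z=z] z' by (simp add: good_def)
      then show "1 \<le> vnorm z'" using Suc z by force
    qed
  qed
  have rec: "?E (gw p i (Suc n)) gi \<le> K * ?E (gw p i n) gi" for n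
  proof -
    have "?E (gw p i (Suc n)) gi = ?E (gw p i n) (\<lambda>z. ?E (gw_step p z) gi)"
      by (simp add: exp_bind gi_nonneg gi_le1)
    also have "\<dots> \<le> ?E (gw p i n) (\<lambda>z. K * gi z)"
    proof (rule integral_mono_AE)
      show "integrable (measure_pmf (gw p i n)) (\<lambda>z. ?E (gw_step p z) gi)"
        by (rule intb[where B=1]) (metis abs_of_nonneg exp_gi_bounds)
      show "integrable (measure_pmf (gw p i n)) (\<lambda>z. K * gi z)"
        by (rule intb[where B="\<bar>K\<bar>"]) (auto simp: abs_mult gi_nonneg gi_le1 intro!: mult_left_le mult_right_le_one_le)
      show "AE z in measure_pmf (gw p i n). ?E (gw_step p z) gi \<le> K * gi z"
        unfolding AE_measure_pmf_iff
      proof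
        fix z assume z: "z \<in> set_pmf (gw p i n)"
        have v: "real (vnorm z) \<ge> 1" using supp[of n] z by auto
        have "?E (gw_step p z) gi * real (vnorm z) \<le> K" using good_step[OF K0 g1, where z=z] by (simp add: good_def)
        then show "?E (gw_step p z) gi \<le> K * gi z" using v by (simp add: gi_def field_simps)
      qed
    qed
    also have "\<dots> = K * ?E (gw p i n) gi" by simp
    finally show ?thesis .
  qed
  have bnd: "?E (gw p i n) gi \<le> K ^ n" for n
  proof (induction n)
    case 0 then show ?case using vnorm_axis[of i] by (simp add: gi_def)
  next
    case (Suc n)
    have "?E (gw p i (Suc n)) gi \<le> K * ?E (gw p i n) gi" by (rule rec)
    also have "\<dots> \<le> K * K ^ n" using Suc K0 by (intro mult_left_mono) auto
    finally show ?case by simp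
  qed
  define c where "c = \<rho> powr \<alpha> * K"
  have c0: "0 \<le> c" using K0 by (simp add: c_def)
  have c1: "c < 1"
  proof -
    have lr: "ln \<rho> > 0" using A2(3) by simp
    have "\<alpha> < - (ln K / ln \<rho>)" using alpha(2) by (simp add: log_def)
    then have "\<alpha> * ln \<rho> < - ln K" using lr by (simp add: field_simps)
    then have "\<alpha> * ln \<rho> + ln K < 0" by simp
    then have "exp (\<alpha> * ln \<rho> + ln K) < 1" by simp
    moreover have "exp (\<alpha> * ln \<rho> + ln K) = c"
      using A2(3) Kpos by (simp add: c_def exp_add powr_def mult.commute)
    ultimately show ?thesis by simp
  qed
  have lim: "(\<lambda>n. c ^ n) \<longlonglongrightarrow> 0" using c0 c1 by (intro LIMSEQ_power_zero) simp
  show ?thesis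
  proof (rule real_tendsto_sandwich[OF _ _ tendsto_const lim])
    show "\<forall>\<^sub>F n in sequentially. 0 \<le> \<rho> powr (\<alpha> * real n) * ?E (gw p i n) (\<lambda>z. 1 / real (vnorm z))"
      using exp_gi_bounds(1) by (simp add: gi_def)
    show "\<forall>\<^sub>F n in sequentially. \<rho> powr (\<alpha> * real n) * ?E (gw p i n) (\<lambda>z. 1 / real (vnorm z)) \<le> c ^ n"
    proof (intro always_eventually allI)
      fix n
      have eq: "\<rho> powr (\<alpha> * real n) = (\<rho> powr \<alpha>) ^ n"
        using A2(3) by (simp add: powr_powr[symmetric] powr_realpow)
      have "\<rho> powr (\<alpha> * real n) * ?E (gw p i n) gi \<le> \<rho> powr (\<alpha> * real n) * K ^ n"
        by (intro mult_left_mono bnd) simp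
      then show "\<rho> powr (\<alpha> * real n) * ?E (gw p i n) (\<lambda>z. 1 / real (vnorm z)) \<le> c ^ n"
        unfolding eq
        by (simp add: c_def power_mult_distrib gi_def)
    qed
  qed
qed

end
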